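(* Let $\theta : A(\mathbb{D})\to M_2(\mathbb{C})$ be a unital bounded homomorphism and let $\alpha : A(\mathbb{D})\to A(\mathbb{D})$ be a unital antilinear map. Define $$\theta_\alpha(f):=\tfrac12\bigl(\theta(f)+\theta(\alpha(f))^*\bigr)\quad(f\in A(\mathbb{D})).$$ Assume that $\|\theta_\alpha\|\le 1$ and that the spectrum of $\theta(z)$ consists of a single point of $\mathbb{D}$, where $z$ is the coordinate function. Then $\|\theta\|_{cb}\le 2$.
   Context: $A(\mathbb{D})$ is the disk algebra: the continuous functions on the closed unit disk that are holomorphic on the open unit disk $\mathbb{D}$, with the supremum norm. $M_k(A(\mathbb{D}))$ carries the norm $\|[f_{ij}]\|=\sup_{|w|\le1}\|[f_{ij}(w)]\|$. For a linear map $\phi$, set $\phi^{(k)}([f_{ij}])=[\phi(f_{ij})]$ and $\|\phi\|_{cb}=\sup_k\|\phi^{(k)}\|$. A map $\alpha$ is antilinear if $\alpha(\lambda f+g)=\overline\lambda\alpha(f)+\alpha(g)$, and it is unital if $\alpha(1)=1$. *)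

theory Defs
  imports "HOL-Analysis.Analysis"
begin

text \<open>The disk algebra A(D), with canonical representatives: continuous on the closed
  unit disk, holomorphic on the open unit disk, and zero outside the closed disk.\<close>
definition disk_algebra :: "(complex \<Rightarrow> complex) set" where
  "disk_algebra = {f. continuous_on (cball 0 1) f \<and> f holomorphic_on ball 0 1
                      \<and> (\<forall>w. 1 < cmod w \<longrightarrow> f w = 0)}"

definition da_one :: "complex \<Rightarrow> complex" where
  "da_one = (\<lambda>w. if cmod w \<le> 1 then 1 else 0)"

definition da_z :: "complex \<Rightarrow> complex" where
  "da_z = (\<lambda>w. if cmod w \<le> 1 then w else 0)"

definition da_norm :: "(complex \<Rightarrow> complex) \<Rightarrow> real" where
  "da_norm f = (SUP w\<in>cball 0 1. cmod (f w))"

definition cmat_norm :: "nat \<Rightarrow> (nat \<Rightarrow> nat \<Rightarrow> complex) \<Rightarrow> real" where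
  "cmat_norm k M = (SUP x\<in>{x::nat \<Rightarrow> complex. (\<Sum>i<k. (cmod (x i))\<^sup>2) \<le> 1}.
      sqrt (\<Sum>i<k. (cmod (\<Sum>j<k. M i j * x j))\<^sup>2))"

definition da_mat_norm :: "nat \<Rightarrow> (nat \<Rightarrow> nat \<Rightarrow> complex \<Rightarrow> complex) \<Rightarrow> real" where
  "da_mat_norm k F = (SUP w\<in>cball 0 1. cmat_norm k (\<lambda>i j. F i j w))"

definition m2_norm :: "complex^2^2 \<Rightarrow> real" where
  "m2_norm A = onorm (\<lambda>x. A *v x)"

text \<open>Operator norm on M_k(M_2(C)) = M_{2k}(C), block form acting on (C^2)^k.\<close>
definition blk_norm :: "nat \<Rightarrow> (nat \<Rightarrow> nat \<Rightarrow> complex^2^2) \<Rightarrow> real" where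
  "blk_norm k B = (SUP x\<in>{x::nat \<Rightarrow> complex^2. (\<Sum>i<k. (norm (x i))\<^sup>2) \<le> 1}.
      sqrt (\<Sum>i<k. (norm (\<Sum>j<k. B i j *v x j))\<^sup>2))"

definition cadj :: "complex^2^2 \<Rightarrow> complex^2^2" where
  "cadj A = (\<chi> i j. cnj (A $ j $ i))"

definition mat_spectrum :: "complex^2^2 \<Rightarrow> complex set" where
  "mat_spectrum A = {\<mu>. \<not> invertible (A - mat \<mu>)}"

definition cscale :: "complex \<Rightarrow> complex^2^2 \<Rightarrow> complex^2^2" where
  "cscale c A = (\<chi> i j. c * A $ i $ j)"

end

theory Submission
  imports Defs "HOL-Complex_Analysis.Cauchy_Integral_Formula"
begin

definition cinner :: "complex^2 \<Rightarrow> complex^2 \<Rightarrow> complex" where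
  "cinner x y = x$1 * cnj (y$1) + x$2 * cnj (y$2)"

definition vperp :: "complex^2 \<Rightarrow> complex^2" where
  "vperp u = (\<chi> i. if i = 1 then - cnj (u$2) else cnj (u$1))"

lemma vperp_1[simp]: "vperp u $ 1 = - cnj (u$2)" and vperp_2[simp]: "vperp u $ 2 = cnj (u$1)"
  by (auto simp: vperp_def)

lemma norm_vec2_sq: "(norm (x::complex^2))\<^sup>2 = (cmod (x$1))\<^sup>2 + (cmod (x$2))\<^sup>2"
  by (simp add: norm_vec_def L2_set_def sum_2)

lemma cmod_sq_c: "(complex_of_real (cmod z))\<^sup>2 = z * cnj z"
  by (metis complex_norm_square of_real_power)

lemma onb_decomp:
  fixes u x :: "complex^2"
  assumes u: "(cmod (u$1))\<^sup>2 + (cmod (u$2))\<^sup>2 = 1"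
  shows "x = cinner x (vperp u) *s vperp u + cinner x u *s u"
proof -
  have h: "u$1 * cnj (u$1) + u$2 * cnj (u$2) = 1"
    using arg_cong[OF u, of complex_of_real] by (simp add: cmod_sq_c)
  show ?thesis unfolding vec_eq_iff forall_2 cinner_def
    using h by simp algebra
qed

lemma unit_h:
  fixes u :: "complex^2"
  assumes u: "(cmod (u$1))\<^sup>2 + (cmod (u$2))\<^sup>2 = 1"
  shows "u$1 * cnj (u$1) + u$2 * cnj (u$2) = 1"
  using arg_cong[OF u, of complex_of_real] by (simp add: cmod_sq_c)

lemma cmod_sq_eq_iff: "(cmod a)\<^sup>2 = r \<longleftrightarrow> a * cnj a = complex_of_real r"
  by (metis cmod_sq_c of_real_eq_iff of_real_power)

lemma onb_norm:
  fixes u x :: "complex^2"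
  assumes u: "(cmod (u$1))\<^sup>2 + (cmod (u$2))\<^sup>2 = 1"
  shows "(norm x)\<^sup>2 = (cmod (cinner x (vperp u)))\<^sup>2 + (cmod (cinner x u))\<^sup>2"
proof -
  have h: "u$1 * cnj (u$1) + u$2 * cnj (u$2) = 1" using unit_h[OF u] .
  have "complex_of_real ((norm x)\<^sup>2) = complex_of_real ((cmod (cinner x (vperp u)))\<^sup>2 + (cmod (cinner x u))\<^sup>2)"
    unfolding norm_vec2_sq of_real_add of_real_power cmod_sq_c cinner_def
    using h by simp algebra
  then show ?thesis by (simp only: of_real_eq_iff)
qed

lemma cinner_uu: "(cmod (u$1))\<^sup>2 + (cmod (u$2))\<^sup>2 = 1 \<Longrightarrow> cinner u u = 1"
  using unit_h by (simp add: cinner_def)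
lemma cinner_vv: "(cmod (u$1))\<^sup>2 + (cmod (u$2))\<^sup>2 = 1 \<Longrightarrow> cinner (vperp u) (vperp u) = 1"
  using unit_h by (simp add: cinner_def algebra_simps)
lemma cinner_uv: "cinner u (vperp u) = 0"
  by (simp add: cinner_def algebra_simps)
lemma cinner_vu: "cinner (vperp u) u = 0"
  by (simp add: cinner_def algebra_simps)

lemma cinner_add_left: "cinner (x + y) z = cinner x z + cinner y z"
  by (simp add: cinner_def algebra_simps)
lemma cinner_scale_left: "cinner (c *s x) z = c * cinner x z"
  by (simp add: cinner_def algebra_simps)
lemma cinner_zero_left: "cinner 0 z = 0"
  by (simp add: cinner_def)

lemma cinner_le_norm:
  fixes u w :: "complex^2"
  assumes u: "(cmod (u$1))\<^sup>2 + (cmod (u$2))\<^sup>2 = 1"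
  shows "cmod (cinner w u) \<le> norm w"
proof -
  have "(cmod (cinner w u))\<^sup>2 \<le> (norm w)\<^sup>2" using onb_norm[OF u, of w] by simp
  then show ?thesis by (simp add: power2_le_iff_abs_le)
qed

lemma norm_comb:
  fixes u :: "complex^2"
  assumes u: "(cmod (u$1))\<^sup>2 + (cmod (u$2))\<^sup>2 = 1"
  shows "(norm (P *s vperp u + Q *s u))\<^sup>2 = (cmod P)\<^sup>2 + (cmod Q)\<^sup>2"
  using onb_norm[OF u, of "P *s vperp u + Q *s u"]
  by (simp add: cinner_add_left cinner_scale_left cinner_uu[OF u] cinner_vv[OF u] cinner_uv cinner_vu)

lemma mv_add: "((A::complex^2^2) + B) *v x = A *v x + B *v x"
  by (simp add: vec_eq_iff forall_2 matrix_vector_mult_def sum_2 algebra_simps)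
lemma mv_cscale: "cscale c A *v x = c *s (A *v x)"
  by (simp add: vec_eq_iff forall_2 matrix_vector_mult_def sum_2 algebra_simps cscale_def)
lemma mv_id: "mat 1 *v (x::complex^2) = x"
  by simp
lemma mv_scale_right: "(A::complex^2^2) *v (c *s x) = c *s (A *v x)"
  by (simp add: vec_eq_iff forall_2 matrix_vector_mult_def sum_2 algebra_simps)
lemma mv_add_right: "(A::complex^2^2) *v (x + y) = A *v x + A *v y"
  by (simp add: vec_eq_iff forall_2 matrix_vector_mult_def sum_2 algebra_simps)
lemma cinner_cadj: "cinner (cadj A *v x) y = cnj (cinner (A *v y) x)"
  by (simp add: cinner_def cadj_def matrix_vector_mult_def sum_2 algebra_simps)

lemma trace_onb:
  fixes u :: "complex^2" and N :: "complex^2^2"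
  assumes u: "(cmod (u$1))\<^sup>2 + (cmod (u$2))\<^sup>2 = 1"
  shows "cinner (N *v u) u + cinner (N *v vperp u) (vperp u) = N$1$1 + N$2$2"
  using unit_h[OF u] by (simp add: cinner_def matrix_vector_mult_def sum_2) algebra

lemma unit_of_nonzero:
  fixes c :: "complex^2"
  assumes "c \<noteq> 0"
  shows "(cmod ((complex_of_real (1 / norm c) *s c)$1))\<^sup>2 + (cmod ((complex_of_real (1 / norm c) *s c)$2))\<^sup>2 = 1"
proof -
  have "norm (complex_of_real (1 / norm c) *s c) = 1"
  proof -
    have "complex_of_real (1 / norm c) *s c = (1 / norm c) *\<^sub>R c"
      by (simp add: vec_eq_iff scaleR_conv_of_real[where 'a=complex] del: scaleR_conv_of_real)
    then show ?thesis using assms by simp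
  qed
  then show ?thesis using norm_vec2_sq[of "complex_of_real (1 / norm c) *s c"] by simp
qed

lemma exists_unit_kernel:
  fixes N :: "complex^2^2"
  assumes NN: "N ** N = 0"
  shows "\<exists>u. (cmod (u$1))\<^sup>2 + (cmod (u$2))\<^sup>2 = 1 \<and> N *v u = 0"
proof -
  define c1 where "c1 = (\<chi> i. N$i$1)"
  define c2 where "c2 = (\<chi> i. N$i$2)"
  have k1: "N *v c1 = 0" using arg_cong[OF NN, of "\<lambda>M. M$1$1"] arg_cong[OF NN, of "\<lambda>M. M$2$1"]
    by (simp add: c1_def vec_eq_iff forall_2 matrix_vector_mult_def matrix_matrix_mult_def sum_2)
  have k2: "N *v c2 = 0" using arg_cong[OF NN, of "\<lambda>M. M$1$2"] arg_cong[OF NN, of "\<lambda>M. M$2$2"]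
    by (simp add: c2_def vec_eq_iff forall_2 matrix_vector_mult_def matrix_matrix_mult_def sum_2)
  show ?thesis
  proof (cases "c1 \<noteq> 0")
    case True
    show ?thesis
      using unit_of_nonzero[OF True] mv_scale_right[of N _ c1] k1 by (metis vector_smult_rzero)
  next
    case F1: False
    show ?thesis
    proof (cases "c2 \<noteq> 0")
      case True
      show ?thesis
        using unit_of_nonzero[OF True] mv_scale_right[of N _ c2] k2 by (metis vector_smult_rzero)
    next
      case False
      then have "N = 0" using F1 unfolding c1_def c2_def by (auto simp: vec_eq_iff forall_2)
      then show ?thesis by (intro exI[of _ "axis 1 1"]) (simp add: axis_def)
    qed
  qed
qed

lemma exists_basis:
  fixes N :: "complex^2^2"
  assumes NN: "N ** N = 0" and tr: "N$1$1 + N$2$2 = 0"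
  shows "\<exists>u a. (cmod (u$1))\<^sup>2 + (cmod (u$2))\<^sup>2 = 1 \<and> N *v u = 0 \<and> N *v vperp u = a *s u"
proof -
  obtain u where u: "(cmod (u$1))\<^sup>2 + (cmod (u$2))\<^sup>2 = 1" and Nu: "N *v u = 0"
    using exists_unit_kernel[OF NN] by blast
  have b0: "cinner (N *v vperp u) (vperp u) = 0"
    using trace_onb[OF u, of N] tr Nu by (simp add: cinner_zero_left)
  have "N *v vperp u = cinner (N *v vperp u) u *s u"
    using onb_decomp[OF u, of "N *v vperp u"] b0 by simp
  then show ?thesis using u Nu by blast
qed

lemma spec_nil:
  fixes A :: "complex^2^2"
  assumes sp: "mat_spectrum A = {\<mu>}"
  shows "(A - mat \<mu>) ** (A - mat \<mu>) = 0 \<and> (A - mat \<mu>)$1$1 + (A - mat \<mu>)$2$2 = 0"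
proof -
  have d0: "det (A - mat \<mu>) = 0" using sp by (auto simp: mat_spectrum_def invertible_det_nz)
  then have d: "(A$1$1 - \<mu>) * (A$2$2 - \<mu>) - A$1$2 * A$2$1 = 0"
    by (simp add: det_2 mat_def)
  have tr: "A$1$1 + A$2$2 - 2 * \<mu> = 0"
  proof (rule ccontr)
    assume nz: "A$1$1 + A$2$2 - 2 * \<mu> \<noteq> 0"
    let ?\<tau> = "A$1$1 + A$2$2 - 2 * \<mu>"
    have "\<mu> + ?\<tau> \<notin> mat_spectrum A" using sp nz by auto
    then have "det (A - mat (\<mu> + ?\<tau>)) \<noteq> 0" by (auto simp: mat_spectrum_def invertible_det_nz)
    moreover have "det (A - mat (\<mu> + ?\<tau>)) = 0"
      using d by (simp add: det_2 mat_def) algebra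
    ultimately show False by simp
  qed
  show ?thesis
    using d tr
    by (simp add: vec_eq_iff forall_2 matrix_matrix_mult_def sum_2 mat_def) algebra
qed

lemma da_lin: "f \<in> disk_algebra \<Longrightarrow> g \<in> disk_algebra \<Longrightarrow> (\<lambda>w. c * f w + g w) \<in> disk_algebra"
  unfolding disk_algebra_def
  by (auto intro!: continuous_intros holomorphic_intros)

lemma da_mult: "f \<in> disk_algebra \<Longrightarrow> g \<in> disk_algebra \<Longrightarrow> (\<lambda>w. f w * g w) \<in> disk_algebra"
  unfolding disk_algebra_def
  by (auto intro!: continuous_intros holomorphic_intros)

lemma da_one_in: "da_one \<in> disk_algebra"
proof -
  have "continuous_on (cball 0 1) da_one"
    by (rule continuous_on_eq[of _ "\<lambda>w. 1"]) (auto intro!: continuous_intros simp: da_one_def)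
  moreover have "da_one holomorphic_on ball 0 1"
    by (rule holomorphic_transform[of "\<lambda>w. 1"]) (auto intro!: holomorphic_intros simp: da_one_def)
  ultimately show ?thesis by (auto simp: disk_algebra_def da_one_def)
qed

lemma da_z_in: "da_z \<in> disk_algebra"
proof -
  have "continuous_on (cball 0 1) da_z"
    by (rule continuous_on_eq[of _ "\<lambda>w. w"]) (auto intro!: continuous_intros simp: da_z_def)
  moreover have "da_z holomorphic_on ball 0 1"
    by (rule holomorphic_transform[of "\<lambda>w. w"]) (auto intro!: holomorphic_intros simp: da_z_def)
  ultimately show ?thesis by (auto simp: disk_algebra_def da_z_def)
qed

definition Qop :: "complex \<Rightarrow> (complex \<Rightarrow> complex) \<Rightarrow> complex \<Rightarrow> complex" where
  "Qop \<mu> h = (\<lambda>z. if cmod z \<le> 1 then (if z = \<mu> then deriv h \<mu> else (h z - h \<mu>) / (z - \<mu>)) else 0)"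

lemma Qop_in:
  assumes h: "h \<in> disk_algebra" and mu: "cmod \<mu> < 1"
  shows "Qop \<mu> h \<in> disk_algebra"
proof -
  define g where "g = (\<lambda>z. if z = \<mu> then deriv h \<mu> else (h z - h \<mu>) / (z - \<mu>))"
  have hc: "continuous_on (cball 0 1) h" and hh: "h holomorphic_on ball 0 1"
    using h by (auto simp: disk_algebra_def)
  have mub: "\<mu> \<in> ball 0 1" using mu by auto
  have gh: "g holomorphic_on ball 0 1"
    unfolding g_def by (rule pole_lemma[OF hh]) (simp add: mu)
  have gc: "continuous_on (cball 0 1) g"
  proof (rule continuous_on_eq_continuous_within[THEN iffD2], intro ballI)
    fix z :: complex assume z: "z \<in> cball 0 1"
    show "continuous (at z within cball 0 1) g"
    proof (cases "z = \<mu>")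
      case True
      have "continuous (at \<mu>) g"
        using continuous_on_interior[OF holomorphic_on_imp_continuous_on[OF gh]] mub by simp
      then show ?thesis using True continuous_at_imp_continuous_at_within by blast
    next
      case False
      have c1: "continuous (at z within cball 0 1) (\<lambda>x. (h x - h \<mu>) / (x - \<mu>))"
        using hc z False
        by (intro continuous_intros) (auto simp: continuous_on_eq_continuous_within)
      show ?thesis
        by (rule continuous_transform_within[OF c1, of "dist z \<mu>"])
           (use False z in \<open>auto simp: g_def dist_commute\<close>)
    qed
  qed
  have "Qop \<mu> h = (\<lambda>z. if cmod z \<le> 1 then g z else 0)"
    by (auto simp: Qop_def g_def)
  moreover have "continuous_on (cball 0 1) (\<lambda>z. if cmod z \<le> 1 then g z else 0)"
    by (rule continuous_on_eq[OF gc]) auto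
  moreover have "(\<lambda>z. if cmod z \<le> 1 then g z else 0) holomorphic_on ball 0 1"
    by (rule holomorphic_transform[OF gh]) auto
  ultimately show ?thesis by (auto simp: disk_algebra_def)
qed

lemma Qop_eq:
  assumes h: "h \<in> disk_algebra"
  shows "h = (\<lambda>w. h \<mu> * da_one w + (\<lambda>w. (\<lambda>w. (-\<mu>) * da_one w + da_z w) w * Qop \<mu> h w) w)"
proof
  fix w
  show "h w = h \<mu> * da_one w + (\<lambda>w. (\<lambda>w. (-\<mu>) * da_one w + da_z w) w * Qop \<mu> h w) w"
  proof (cases "cmod w \<le> 1")
    case True
    then show ?thesis by (cases "w = \<mu>") (auto simp: da_one_def da_z_def Qop_def field_simps)
  next
    case False
    then show ?thesis using h by (auto simp: da_one_def da_z_def Qop_def disk_algebra_def)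
  qed
qed

lemma Qop_at: "cmod \<mu> < 1 \<Longrightarrow> Qop \<mu> h \<mu> = deriv h \<mu>"
  by (simp add: Qop_def)

lemma mm_add_right: "(N::complex^2^2) ** (A + B) = N ** A + N ** B"
  by (simp add: vec_eq_iff forall_2 matrix_matrix_mult_def sum_2 algebra_simps)
lemma mm_cscale_id: "(N::complex^2^2) ** cscale c (mat 1) = cscale c N"
  by (simp add: vec_eq_iff forall_2 matrix_matrix_mult_def sum_2 cscale_def mat_def algebra_simps)
lemma cscale_id_diff: "cscale (-\<mu>) (mat 1) + A = A - mat (\<mu>::complex)"
  by (simp add: vec_eq_iff forall_2 cscale_def mat_def)

lemma theta_repr:
  fixes \<theta> :: "(complex \<Rightarrow> complex) \<Rightarrow> complex^2^2"
  assumes lin: "\<And>c f g. f \<in> disk_algebra \<Longrightarrow> g \<in> disk_algebra \<Longrightarrow>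
                  \<theta> (\<lambda>w. c * f w + g w) = cscale c (\<theta> f) + \<theta> g"
    and mult: "\<And>f g. f \<in> disk_algebra \<Longrightarrow> g \<in> disk_algebra \<Longrightarrow>
                  \<theta> (\<lambda>w. f w * g w) = \<theta> f ** \<theta> g"
    and unital: "\<theta> da_one = mat 1"
    and mu: "cmod \<mu> < 1"
    and NN: "(\<theta> da_z - mat \<mu>) ** (\<theta> da_z - mat \<mu>) = 0"
    and h: "h \<in> disk_algebra"
  shows "\<theta> h = cscale (h \<mu>) (mat 1) + cscale (deriv h \<mu>) (\<theta> da_z - mat \<mu>)"
proof -
  define N where "N = \<theta> da_z - mat \<mu>"
  define e where "e = (\<lambda>w. (-\<mu>) * da_one w + da_z w)"
  have e_in: "e \<in> disk_algebra" unfolding e_def by (intro da_lin da_one_in da_z_in)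
  have te: "\<theta> e = N" unfolding e_def N_def
    using lin[OF da_one_in da_z_in, of "-\<mu>"] by (simp only: unital cscale_id_diff)
  have step: "\<theta> g = cscale (g \<mu>) (mat 1) + N ** \<theta> (Qop \<mu> g)" if g: "g \<in> disk_algebra" for g
  proof -
    have q: "Qop \<mu> g \<in> disk_algebra" using Qop_in[OF g mu] .
    have "\<theta> g = \<theta> (\<lambda>w. g \<mu> * da_one w + (\<lambda>w. (\<lambda>w. (-\<mu>) * da_one w + da_z w) w * Qop \<mu> g w) w)"
      using Qop_eq[OF g, of \<mu>] by (simp only: flip: fun_eq_iff)
    also have "\<dots> = cscale (g \<mu>) (mat 1) + \<theta> (\<lambda>w. e w * Qop \<mu> g w)"
      using lin[OF da_one_in da_mult[OF e_in q]] unital by (simp add: e_def)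
    also have "\<theta> (\<lambda>w. e w * Qop \<mu> g w) = N ** \<theta> (Qop \<mu> g)"
      using mult[OF e_in q] te by simp
    finally show ?thesis .
  qed
  have "\<theta> h = cscale (h \<mu>) (mat 1) + N ** (cscale (Qop \<mu> h \<mu>) (mat 1) + N ** \<theta> (Qop \<mu> (Qop \<mu> h)))"
    using step[OF h] step[OF Qop_in[OF h mu]] by simp
  also have "\<dots> = cscale (h \<mu>) (mat 1) + cscale (deriv h \<mu>) N"
    using NN by (simp add: mm_add_right mm_cscale_id Qop_at[OF mu] matrix_mul_assoc N_def)
  finally show ?thesis unfolding N_def .
qed

lemma mob_identity:
  "(cmod (1 - cnj \<mu> * w))\<^sup>2 - (cmod (w - \<mu>))\<^sup>2 = (1 - (cmod w)\<^sup>2) * (1 - (cmod \<mu>)\<^sup>2)"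
  by (simp only: cmod_power2) (simp add: power2_eq_square algebra_simps)

lemma mob_denom_nz: "cmod \<mu> < 1 \<Longrightarrow> cmod w \<le> 1 \<Longrightarrow> 1 - cnj \<mu> * w \<noteq> 0"
proof
  assume "cmod \<mu> < 1" "cmod w \<le> 1" "1 - cnj \<mu> * w = 0"
  then have "cmod (cnj \<mu> * w) = 1" by (metis eq_iff_diff_eq_0 norm_one)
  moreover have "cmod (cnj \<mu> * w) < 1"
  proof -
    have "cmod \<mu> * cmod w \<le> cmod \<mu>" using \<open>cmod w \<le> 1\<close> by (simp add: mult_left_le)
    then show ?thesis using \<open>cmod \<mu> < 1\<close> by (simp add: norm_mult)
  qed
  ultimately show False by simp
qed

lemma mob_le1:
  assumes "cmod \<mu> < 1" "cmod w \<le> 1"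
  shows "cmod ((w - \<mu>) / (1 - cnj \<mu> * w)) \<le> 1"
proof -
  have "(cmod (w - \<mu>))\<^sup>2 \<le> (cmod (1 - cnj \<mu> * w))\<^sup>2"
    using mob_identity[of \<mu> w] assms
  proof -
    have "0 \<le> (1 - (cmod w)\<^sup>2) * (1 - (cmod \<mu>)\<^sup>2)"
      using assms by (intro mult_nonneg_nonneg) (simp_all add: power_le_one abs_square_le_1)
    then show ?thesis using mob_identity[of \<mu> w] by linarith
  qed
  then have "cmod (w - \<mu>) \<le> cmod (1 - cnj \<mu> * w)"
    by (simp add: power2_le_iff_abs_le)
  then show ?thesis using mob_denom_nz[OF assms]
    by (simp add: norm_divide divide_le_eq_1)
qed

definition mob :: "complex \<Rightarrow> complex \<Rightarrow> complex" where
  "mob \<mu> = (\<lambda>w. if cmod w \<le> 1 then (w - \<mu>) / (1 - cnj \<mu> * w) else 0)"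

lemma mob_in: assumes mu: "cmod \<mu> < 1" shows "mob \<mu> \<in> disk_algebra"
proof -
  have "continuous_on (cball 0 1) (\<lambda>w. (w - \<mu>) / (1 - cnj \<mu> * w))"
    using mob_denom_nz[OF mu] by (auto intro!: continuous_intros)
  then have "continuous_on (cball 0 1) (mob \<mu>)"
    by (rule continuous_on_eq) (auto simp: mob_def)
  moreover have "(\<lambda>w. (w - \<mu>) / (1 - cnj \<mu> * w)) holomorphic_on ball 0 1"
    using mob_denom_nz[OF mu] by (auto intro!: holomorphic_intros)
  then have "mob \<mu> holomorphic_on ball 0 1"
    by (rule holomorphic_transform) (auto simp: mob_def)
  ultimately show ?thesis by (auto simp: disk_algebra_def mob_def)
qed

lemma mob_norm: assumes mu: "cmod \<mu> < 1" shows "da_norm (mob \<mu>) \<le> 1"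
  unfolding da_norm_def
  by (rule cSUP_least) (auto simp: mob_def mob_le1[OF mu])

lemma mob_at: "cmod \<mu> < 1 \<Longrightarrow> mob \<mu> \<mu> = 0"
  by (simp add: mob_def)

lemma mob_deriv: assumes mu: "cmod \<mu> < 1"
  shows "deriv (mob \<mu>) \<mu> = 1 / (1 - \<mu> * cnj \<mu>)"
proof -
  have nz: "1 - cnj \<mu> * \<mu> \<noteq> 0" using mob_denom_nz[OF mu, of \<mu>] mu by simp
  have d1: "((\<lambda>w. w - \<mu>) has_field_derivative 1) (at \<mu>)"
    using DERIV_diff[OF DERIV_ident DERIV_const[of \<mu>]] by simp
  have d2: "((\<lambda>w. 1 - cnj \<mu> * w) has_field_derivative - cnj \<mu>) (at \<mu>)"
    using DERIV_diff[OF DERIV_const[of 1] DERIV_cmult[OF DERIV_ident, of "cnj \<mu>"]] by simp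
  have "((\<lambda>w. (w - \<mu>) / (1 - cnj \<mu> * w)) has_field_derivative 1 / (1 - \<mu> * cnj \<mu>)) (at \<mu>)"
    using DERIV_divide[OF d1 d2] nz by (simp add: mult.commute)
  then have "(mob \<mu> has_field_derivative 1 / (1 - \<mu> * cnj \<mu>)) (at \<mu>)"
    by (rule has_field_derivative_transform_within_open[of _ _ _ "ball 0 1"])
       (use mu in \<open>auto simp: mob_def\<close>)
  then show ?thesis by (rule DERIV_imp_deriv)
qed

lemma vperp_unit:
  fixes u :: "complex^2"
  assumes u: "(cmod (u$1))\<^sup>2 + (cmod (u$2))\<^sup>2 = 1"
  shows "norm (vperp u) = 1"
proof -
  have "(norm (vperp u))\<^sup>2 = 1" using u by (simp add: norm_vec2_sq add.commute)
  then show ?thesis using norm_ge_zero[of "vperp u"] by (auto simp: power2_eq_1_iff)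
qed

lemma a_bound:
  fixes \<theta> :: "(complex \<Rightarrow> complex) \<Rightarrow> complex^2^2"
    and \<alpha> :: "(complex \<Rightarrow> complex) \<Rightarrow> (complex \<Rightarrow> complex)"
  assumes repr: "\<And>h. h \<in> disk_algebra \<Longrightarrow> \<theta> h = cscale (h \<mu>) (mat 1) + cscale (deriv h \<mu>) N"
    and alpha_maps: "\<And>f. f \<in> disk_algebra \<Longrightarrow> \<alpha> f \<in> disk_algebra"
    and contr: "\<And>f. f \<in> disk_algebra \<Longrightarrow> da_norm f \<le> 1 \<Longrightarrow>
                  m2_norm (cscale (1/2) (\<theta> f + cadj (\<theta> (\<alpha> f)))) \<le> 1"
    and mu: "cmod \<mu> < 1"
    and u: "(cmod (u$1))\<^sup>2 + (cmod (u$2))\<^sup>2 = 1"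
    and Nu: "N *v u = 0" and Nv: "N *v vperp u = a *s u"
  shows "cmod a \<le> 2 * (1 - (cmod \<mu>)\<^sup>2)"
proof -
  define f where "f = mob \<mu>"
  define g where "g = \<alpha> f"
  have f_in: "f \<in> disk_algebra" unfolding f_def by (rule mob_in[OF mu])
  have g_in: "g \<in> disk_algebra" unfolding g_def by (rule alpha_maps[OF f_in])
  define B where "B = cscale (1/2) (\<theta> f + cadj (\<theta> g))"
  have Bn: "m2_norm B \<le> 1" unfolding B_def g_def using contr[OF f_in] mob_norm[OF mu] f_def by simp
  define d where "d = deriv f \<mu>"
  have d: "d = 1 / (1 - \<mu> * cnj \<mu>)" unfolding d_def f_def by (rule mob_deriv[OF mu])
  have tf: "\<theta> f = cscale 0 (mat 1) + cscale d N"
    using repr[OF f_in] mob_at[OF mu] by (simp add: f_def d_def)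
  have tg: "\<theta> g = cscale (g \<mu>) (mat 1) + cscale (deriv g \<mu>) N"
    using repr[OF g_in] .
  have tgu: "\<theta> g *v u = g \<mu> *s u"
    unfolding tg by (simp add: mv_add mv_cscale Nu)
  have eq1: "cinner (B *v vperp u) u = (1/2) * (d * a)"
    unfolding B_def mv_cscale mv_add cinner_scale_left cinner_add_left cinner_cadj tgu tf
    by (simp add: mv_add mv_cscale Nv cinner_add_left cinner_scale_left cinner_uu[OF u] cinner_uv
        cinner_zero_left)
  have bnd: "cmod (cinner (B *v vperp u) u) \<le> 1"
  proof -
    have "cmod (cinner (B *v vperp u) u) \<le> norm (B *v vperp u)" by (rule cinner_le_norm[OF u])
    also have "\<dots> \<le> onorm ((*v) B) * norm (vperp u)" by (rule onorm) simp
    also have "\<dots> = m2_norm B" by (simp add: vperp_unit[OF u] m2_norm_def)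
    finally show ?thesis using Bn by simp
  qed
  have "d * a = 2 * cinner (B *v vperp u) u" using eq1 by (simp add: mult.commute)
  then have "cmod (d * a) = 2 * cmod (cinner (B *v vperp u) u)" by (simp add: norm_mult)
  then have "cmod (d * a) \<le> 2" using bnd by linarith
  define r where "r = 1 - (cmod \<mu>)\<^sup>2"
  have r0: "r > 0" using mu by (simp add: r_def power_less_one_iff abs_square_less_1)
  have dd: "d = complex_of_real (1 / r)"
    unfolding d r_def by (simp add: cmod_sq_c)
  have "cmod (d * a) = cmod a / r" using r0 by (simp add: dd norm_mult norm_divide)
  then have "cmod a / r \<le> 2" using \<open>cmod (d * a) \<le> 2\<close> by simp
  then have "cmod a \<le> 2 * r" using r0 by (simp add: divide_le_eq mult.commute)
  then show ?thesis by (simp add: r_def)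
qed

definition nsq :: "nat \<Rightarrow> (nat \<Rightarrow> complex) \<Rightarrow> real" where
  "nsq k x = (\<Sum>i<k. (cmod (x i))\<^sup>2)"

definition mvk :: "nat \<Rightarrow> (nat \<Rightarrow> nat \<Rightarrow> complex) \<Rightarrow> (nat \<Rightarrow> complex) \<Rightarrow> nat \<Rightarrow> complex" where
  "mvk k M x i = (\<Sum>j<k. M i j * x j)"

lemma nsq_nonneg: "0 \<le> nsq k x"
  by (simp add: nsq_def sum_nonneg)

lemma nsq_zero: "nsq k x = 0 \<Longrightarrow> i < k \<Longrightarrow> x i = 0"
  unfolding nsq_def by (subst (asm) sum_nonneg_eq_0_iff) auto

lemma nsq_scale: "nsq k (\<lambda>i. c * x i) = (cmod c)\<^sup>2 * nsq k x"
  by (simp add: nsq_def norm_mult power_mult_distrib sum_distrib_left)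

lemma mvk_scale: "mvk k M (\<lambda>j. c * x j) = (\<lambda>i. c * mvk k M x i)"
  by (simp add: mvk_def fun_eq_iff sum_distrib_left algebra_simps)

lemma contr_hom:
  assumes c: "\<And>x. nsq k x \<le> 1 \<Longrightarrow> nsq k (mvk k M x) \<le> 1"
  shows "nsq k (mvk k M x) \<le> nsq k x"
proof (cases "nsq k x = 0")
  case True
  then have "mvk k M x = (\<lambda>i. 0)"
    unfolding mvk_def using nsq_zero[OF True] by (auto simp: fun_eq_iff intro!: sum.neutral)
  then show ?thesis using True by (simp add: nsq_def)
next
  case False
  define s where "s = sqrt (nsq k x)"
  have s0: "s > 0" using False nsq_nonneg[of k x] by (simp add: s_def)
  have ss: "s\<^sup>2 = nsq k x" using nsq_nonneg[of k x] by (simp add: s_def)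
  have "nsq k (\<lambda>j. complex_of_real (1/s) * x j) = 1"
    unfolding nsq_scale using s0 ss False by (simp add: power_divide norm_divide)
  then have "nsq k (mvk k M (\<lambda>j. complex_of_real (1/s) * x j)) \<le> 1" using c by simp
  then have "(1/s)\<^sup>2 * nsq k (mvk k M x) \<le> 1" unfolding mvk_scale nsq_scale using s0 by (simp add: norm_divide)
  moreover have "nsq k x > 0" using False nsq_nonneg[of k x] by simp
  ultimately show ?thesis using ss by (simp add: power_divide divide_le_eq)
qed

lemma bilin_bound:
  assumes c: "\<And>x. nsq k x \<le> 1 \<Longrightarrow> nsq k (mvk k M x) \<le> 1"
  shows "cmod (\<Sum>i<k. cnj (y i) * mvk k M x i) \<le> (nsq k x + nsq k y) / 2"
proof -
  have "cmod (\<Sum>i<k. cnj (y i) * mvk k M x i) \<le> (\<Sum>i<k. cmod (y i) * cmod (mvk k M x i))"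
    by (rule order_trans[OF norm_sum]) (simp add: norm_mult)
  also have "\<dots> \<le> (\<Sum>i<k. ((cmod (y i))\<^sup>2 + (cmod (mvk k M x i))\<^sup>2) / 2)"
  proof (rule sum_mono)
    fix i
    show "cmod (y i) * cmod (mvk k M x i) \<le> ((cmod (y i))\<^sup>2 + (cmod (mvk k M x i))\<^sup>2) / 2"
      using sum_squares_bound[of "cmod (y i)" "cmod (mvk k M x i)"] by (simp add: mult.assoc field_simps)
  qed
  also have "\<dots> = (nsq k y + nsq k (mvk k M x)) / 2"
    by (simp add: nsq_def sum.distrib sum_divide_distrib[symmetric])
  also have "\<dots> \<le> (nsq k x + nsq k y) / 2" using contr_hom[OF c, of x] by simp
  finally show ?thesis .
qed

lemma cmod_add_sq: "(cmod (a + c))\<^sup>2 = (cmod a)\<^sup>2 + (cmod c)\<^sup>2 + 2 * Re (cnj a * c)"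
  by (simp only: cmod_power2) (simp add: power2_eq_square algebra_simps)

definition phi :: "complex \<Rightarrow> complex \<Rightarrow> complex" where
  "phi \<mu> w = (w + \<mu>) / (1 + cnj \<mu> * w)"

lemma phi_alt: "phi \<mu> w = (w - (-\<mu>)) / (1 - cnj (-\<mu>) * w)"
  by (simp add: phi_def)

lemma phi_denom: "cmod \<mu> < 1 \<Longrightarrow> cmod w \<le> 1 \<Longrightarrow> 1 + cnj \<mu> * w \<noteq> 0"
  using mob_denom_nz[of "-\<mu>" w] by simp

lemma phi_cball: "cmod \<mu> < 1 \<Longrightarrow> cmod w \<le> 1 \<Longrightarrow> cmod (phi \<mu> w) \<le> 1"
  unfolding phi_alt by (rule mob_le1) simp_all

lemma phi_ball:
  assumes mu: "cmod \<mu> < 1" and w: "cmod w < 1"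
  shows "cmod (phi \<mu> w) < 1"
proof -
  have "0 < (1 - (cmod w)\<^sup>2) * (1 - (cmod (-\<mu>))\<^sup>2)"
    using assms by (intro mult_pos_pos) (simp_all add: abs_square_less_1)
  then have "(cmod (w - (-\<mu>)))\<^sup>2 < (cmod (1 - cnj (-\<mu>) * w))\<^sup>2"
    using mob_identity[of "-\<mu>" w] by linarith
  then have "cmod (w - (-\<mu>)) < cmod (1 - cnj (-\<mu>) * w)"
    by (meson norm_ge_zero power_less_imp_less_base)
  then show ?thesis using mob_denom_nz[of "-\<mu>" w] assms
    unfolding phi_alt by (simp add: norm_divide divide_less_eq_1)
qed

lemma phi_deriv:
  assumes mu: "cmod \<mu> < 1"
  shows "(phi \<mu> has_field_derivative (1 - \<mu> * cnj \<mu>)) (at 0)"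
proof -
  have d1: "((\<lambda>w. w + \<mu>) has_field_derivative 1) (at 0)"
    using DERIV_add[OF DERIV_ident DERIV_const[of \<mu>]] by simp
  have d2: "((\<lambda>w. 1 + cnj \<mu> * w) has_field_derivative cnj \<mu>) (at 0)"
    using DERIV_add[OF DERIV_const[of 1] DERIV_cmult[OF DERIV_ident, of "cnj \<mu>"]] by simp
  have "((\<lambda>w. (w + \<mu>) / (1 + cnj \<mu> * w)) has_field_derivative (1 - \<mu> * cnj \<mu>)) (at 0)"
    using DERIV_divide[OF d1 d2] by simp
  then show ?thesis unfolding phi_def[abs_def] .
qed

lemma phi_hol: "cmod \<mu> < 1 \<Longrightarrow> phi \<mu> holomorphic_on ball 0 1"
  unfolding phi_def[abs_def] using phi_denom[of \<mu>]
  by (intro holomorphic_intros) auto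

lemma phi_cont: "cmod \<mu> < 1 \<Longrightarrow> continuous_on (cball 0 1) (phi \<mu>)"
  unfolding phi_def[abs_def] using phi_denom[of \<mu>]
  by (intro continuous_intros) auto

lemma exp_circle_integral:
  "((\<lambda>x::real. Re (C * exp (2 * of_real pi * \<i> * of_real x))) has_integral 0) {0..1}"
proof -
  have ftc: "((\<lambda>x::real. 2 * pi * \<i> * 1 * exp (2 * of_real pi * \<i> * of_real x)) has_integral
          (circlepath 0 1 1 - circlepath 0 1 0)) {0..1}"
    using fundamental_theorem_of_calculus[of 0 1 "circlepath 0 1", OF _ has_vector_derivative_circlepath]
    by simp
  moreover have "circlepath 0 1 1 - circlepath 0 1 0 = 0"
    using pathfinish_circlepath[of 0 1] pathstart_circlepath[of 0 1]
    by (simp add: pathstart_def pathfinish_def)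
  ultimately have "((\<lambda>x::real. 2 * pi * \<i> * 1 * exp (2 * of_real pi * \<i> * of_real x)) has_integral 0) {0..1}"
    by simp
  then have "((\<lambda>x::real. exp (2 * of_real pi * \<i> * of_real x)) has_integral 0) {0..1}"
    using has_integral_mult_right_iff[of "2 * pi * \<i> * 1" "\<lambda>x::real. exp (2 * of_real pi * \<i> * of_real x)" 0 "{0..1}"]
    by simp
  from has_integral_mult_right[OF this, of C]
  have "((\<lambda>x::real. C * exp (2 * of_real pi * \<i> * of_real x)) has_integral 0) {0..1}"
    by simp
  from has_integral_linear[OF this bounded_linear_Re] show ?thesis by (simp add: o_def)
qed

lemma sum_re_aux: "(\<Sum>j<k. Re (a j * \<zeta>)) = Re ((\<Sum>j<k. a j) * \<zeta>)"
  by (simp only: Re_sum sum_distrib_right)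

lemma nsq_lin:
  assumes z: "cmod \<zeta> = 1"
  shows "nsq k (\<lambda>j. p j + q j * \<zeta>) = nsq k p + nsq k q + 2 * Re ((\<Sum>j<k. cnj (p j) * q j) * \<zeta>)"
proof -
  have t: "(cmod (p j + q j * \<zeta>))\<^sup>2 = (cmod (p j))\<^sup>2 + (cmod (q j))\<^sup>2 + 2 * Re (cnj (p j) * q j * \<zeta>)" for j
  proof -
    have "cmod (q j * \<zeta>) = cmod (q j)" using z by (simp add: norm_mult)
    then show ?thesis using cmod_add_sq[of "p j" "q j * \<zeta>"] by (simp only: mult.assoc)
  qed
  have "nsq k (\<lambda>j. p j + q j * \<zeta>) = (\<Sum>j<k. (cmod (p j))\<^sup>2 + (cmod (q j))\<^sup>2 + 2 * Re (cnj (p j) * q j * \<zeta>))"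
    unfolding nsq_def by (rule sum.cong[OF refl]) (rule t)
  also have "\<dots> = nsq k p + nsq k q + 2 * (\<Sum>j<k. Re (cnj (p j) * q j * \<zeta>))"
    unfolding nsq_def by (simp only: sum.distrib sum_distrib_left)
  also have "(\<Sum>j<k. Re (cnj (p j) * q j * \<zeta>)) = Re ((\<Sum>j<k. cnj (p j) * q j) * \<zeta>)"
    by (rule sum_re_aux)
  finally show ?thesis .
qed

lemma nsq_lin2:
  assumes z: "cmod \<zeta> = 1"
  shows "nsq k (\<lambda>i. t i + cnj \<zeta> * s i) = nsq k s + nsq k t + 2 * Re ((\<Sum>i<k. cnj (s i) * t i) * \<zeta>)"
proof -
  have tt: "(cmod (t i + cnj \<zeta> * s i))\<^sup>2 = (cmod (s i))\<^sup>2 + (cmod (t i))\<^sup>2 + 2 * Re (cnj (s i) * t i * \<zeta>)" for i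
  proof -
    have r: "Re (cnj (t i) * (cnj \<zeta> * s i)) = Re (cnj (s i) * t i * \<zeta>)"
      by (simp add: algebra_simps)
    have "cmod (cnj \<zeta> * s i) = cmod (s i)" using z by (simp add: norm_mult)
    then show ?thesis using cmod_add_sq[of "t i" "cnj \<zeta> * s i"] r by simp
  qed
  have "nsq k (\<lambda>i. t i + cnj \<zeta> * s i) = (\<Sum>i<k. (cmod (s i))\<^sup>2 + (cmod (t i))\<^sup>2 + 2 * Re (cnj (s i) * t i * \<zeta>))"
    unfolding nsq_def by (rule sum.cong[OF refl]) (rule tt)
  also have "\<dots> = nsq k s + nsq k t + 2 * (\<Sum>i<k. Re (cnj (s i) * t i * \<zeta>))"
    unfolding nsq_def by (simp only: sum.distrib sum_distrib_left)
  also have "(\<Sum>i<k. Re (cnj (s i) * t i * \<zeta>)) = Re ((\<Sum>i<k. cnj (s i) * t i) * \<zeta>)"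
    by (rule sum_re_aux)
  finally show ?thesis .
qed

lemma KL:
  fixes F :: "nat \<Rightarrow> nat \<Rightarrow> complex \<Rightarrow> complex"
  assumes Fin: "\<And>i j. i < k \<Longrightarrow> j < k \<Longrightarrow> F i j \<in> disk_algebra"
    and contr: "\<And>w x. cmod w \<le> 1 \<Longrightarrow> nsq k x \<le> 1 \<Longrightarrow> nsq k (mvk k (\<lambda>i j. F i j w) x) \<le> 1"
    and mu: "cmod \<mu> < 1"
  shows "cmod (\<Sum>i<k. cnj (s i) * mvk k (\<lambda>i j. F i j \<mu>) p i
            + cnj (t i) * (mvk k (\<lambda>i j. F i j \<mu>) q i
               + (1 - \<mu> * cnj \<mu>) * mvk k (\<lambda>i j. deriv (F i j) \<mu>) p i))
         \<le> (nsq k p + nsq k q + nsq k s + nsq k t) / 2"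
proof -
  define c where "c = 1 - \<mu> * cnj \<mu>"
  define H where "H = (\<lambda>w. \<Sum>i<k. (cnj (s i) * w + cnj (t i)) *
                         (\<Sum>j<k. F i j (phi \<mu> w) * (p j + q j * w)))"
  define T where "T = (\<Sum>i<k. cnj (s i) * mvk k (\<lambda>i j. F i j \<mu>) p i
            + cnj (t i) * (mvk k (\<lambda>i j. F i j \<mu>) q i
               + c * mvk k (\<lambda>i j. deriv (F i j) \<mu>) p i))"
  define X where "X = nsq k p + nsq k q + nsq k s + nsq k t"
  have phi0: "phi \<mu> 0 = \<mu>" by (simp add: phi_def)
  have Fh: "F i j holomorphic_on ball 0 1" if "i < k" "j < k" for i j
    using Fin[OF that] by (simp add: disk_algebra_def)
  have Fc: "continuous_on (cball 0 1) (F i j)" if "i < k" "j < k" for i j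
    using Fin[OF that] by (simp add: disk_algebra_def)
  have phi_ball': "phi \<mu> ` ball 0 1 \<subseteq> ball 0 1" using phi_ball[OF mu] by auto
  have phi_cball': "phi \<mu> ` cball 0 1 \<subseteq> cball 0 1" using phi_cball[OF mu] by auto
  have FPh: "(\<lambda>w. F i j (phi \<mu> w)) holomorphic_on ball 0 1" if "i < k" "j < k" for i j
    using holomorphic_on_compose_gen[OF phi_hol[OF mu] Fh[OF that] phi_ball'] by (simp add: o_def)
  have FPc: "continuous_on (cball 0 1) (\<lambda>w. F i j (phi \<mu> w))" if "i < k" "j < k" for i j
    by (rule continuous_on_compose2[OF Fc[OF that] phi_cont[OF mu] phi_cball'])
  have Hh: "H holomorphic_on ball 0 1"
    unfolding H_def by (intro holomorphic_intros FPh) auto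
  have Hc: "continuous_on (cball 0 1) H"
    unfolding H_def by (intro continuous_intros FPc) auto
  have dFP: "((\<lambda>w. F i j (phi \<mu> w)) has_field_derivative deriv (F i j) \<mu> * c) (at 0)"
    if "i < k" "j < k" for i j
  proof -
    have "(F i j has_field_derivative deriv (F i j) \<mu>) (at (phi \<mu> 0))"
      unfolding phi0 by (rule holomorphic_derivI[OF Fh[OF that]]) (use mu in auto)
    from DERIV_chain2[OF this phi_deriv[OF mu]] show ?thesis by (simp add: c_def)
  qed
  have dlin: "((\<lambda>w. a + b * w) has_field_derivative b) (at 0)" for a b :: complex
    using DERIV_add[OF DERIV_const[of a] DERIV_cmult[OF DERIV_ident, of b]] by simp
  have dlin': "((\<lambda>w. b * w + a) has_field_derivative b) (at 0)" for a b :: complex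
    using DERIV_add[OF DERIV_cmult[OF DERIV_ident, of b] DERIV_const[of a]] by simp
  have dinner: "((\<lambda>w. \<Sum>j<k. F i j (phi \<mu> w) * (p j + q j * w)) has_field_derivative
      (\<Sum>j<k. deriv (F i j) \<mu> * c * p j + q j * F i j \<mu>)) (at 0)" if "i < k" for i
  proof (rule DERIV_sum)
    fix j assume "j \<in> {..<k}"
    then have j: "j < k" by simp
    from DERIV_mult[OF dFP[OF that j] dlin[of "p j" "q j"]]
    show "((\<lambda>w. F i j (phi \<mu> w) * (p j + q j * w)) has_field_derivative
        deriv (F i j) \<mu> * c * p j + q j * F i j \<mu>) (at 0)"
      by (simp add: phi0)
  qed
  have dH: "(H has_field_derivative
      (\<Sum>i<k. cnj (s i) * (\<Sum>j<k. F i j \<mu> * p j)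
          + (\<Sum>j<k. deriv (F i j) \<mu> * c * p j + q j * F i j \<mu>) * cnj (t i))) (at 0)"
    unfolding H_def
  proof (rule DERIV_sum)
    fix i assume "i \<in> {..<k}"
    then have i: "i < k" by simp
    from DERIV_mult[OF dlin'[of "cnj (s i)" "cnj (t i)"] dinner[OF i]]
    show "((\<lambda>w. (cnj (s i) * w + cnj (t i)) * (\<Sum>j<k. F i j (phi \<mu> w) * (p j + q j * w)))
        has_field_derivative cnj (s i) * (\<Sum>j<k. F i j \<mu> * p j)
          + (\<Sum>j<k. deriv (F i j) \<mu> * c * p j + q j * F i j \<mu>) * cnj (t i)) (at 0)"
      by (simp add: phi0)
  qed
  have derivH: "deriv H 0 = T"
  proof -
    have "deriv H 0 = (\<Sum>i<k. cnj (s i) * (\<Sum>j<k. F i j \<mu> * p j)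
          + (\<Sum>j<k. deriv (F i j) \<mu> * c * p j + q j * F i j \<mu>) * cnj (t i))"
      by (rule DERIV_imp_deriv[OF dH])
    also have "\<dots> = T"
      unfolding T_def mvk_def
      by (intro sum.cong refl) (simp add: sum.distrib sum_distrib_left algebra_simps)
    finally show ?thesis .
  qed
  define \<gamma> where "\<gamma> = circlepath 0 1"
  define e where "e = (\<lambda>x::real. exp (2 * of_real pi * \<i> * of_real x))"
  have \<gamma>e: "\<gamma> x = e x" for x by (simp add: \<gamma>_def e_def circlepath)
  have ee: "cmod (e x) = 1" for x
  proof -
    have "2 * of_real pi * \<i> * of_real x = \<i> * of_real (2 * pi * x)" by simp
    then show ?thesis unfolding e_def by (simp only: norm_exp_i_times)
  qed
  have cauchy: "((\<lambda>u. H u / (u - 0) ^ Suc 1) has_contour_integral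
      (2 * pi * \<i> / fact 1 * (deriv ^^ 1) H 0)) (circlepath 0 1)"
    by (rule Cauchy_has_contour_integral_higher_derivative_circlepath[OF Hc Hh]) simp
  define I where "I = (\<lambda>x. H (\<gamma> x) / (\<gamma> x - 0) ^ Suc 1 * vector_derivative \<gamma> (at x within {0..1}))"
  have hasI: "(I has_integral (2 * pi * \<i> * T)) {0..1}"
    using cauchy derivH unfolding has_contour_integral_def I_def \<gamma>_def by simp
  define Cc where "Cc = (\<Sum>j<k. cnj (p j) * q j) + (\<Sum>i<k. cnj (s i) * t i)"
  define g where "g = (\<lambda>x::real. pi * X + 2 * pi * Re (Cc * e x))"
  have hasg: "(g has_integral (pi * X)) {0..1}"
  proof -
    have "((\<lambda>x::real. 2 * pi * Re (Cc * e x)) has_integral (2 * pi * 0)) {0..1}"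
      using has_integral_mult_right[OF exp_circle_integral[of Cc], of "2 * pi"] by (simp add: e_def)
    from has_integral_add[OF has_integral_const_real[of "pi * X" 0 1] this]
    show ?thesis by (simp add: g_def)
  qed
  have bound: "norm (I x) \<le> g x" if x: "x \<in> {0..1}" for x
  proof -
    define \<zeta> where "\<zeta> = e x"
    have z1: "cmod \<zeta> = 1" using ee by (simp add: \<zeta>_def)
    have z0: "\<zeta> \<noteq> 0" using z1 by auto
    have vd: "vector_derivative \<gamma> (at x within {0..1}) = 2 * pi * \<i> * \<zeta>"
      using vector_derivative_circlepath01[of x 0 1] x by (simp add: \<gamma>_def \<zeta>_def e_def)
    have Ix: "I x = 2 * pi * \<i> * (H \<zeta> / \<zeta>)"
      unfolding I_def vd \<gamma>e \<zeta>_def[symmetric] using z0 by (simp add: power2_eq_square field_simps)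
    have nI: "norm (I x) = 2 * pi * cmod (H \<zeta>)"
      unfolding Ix using z1 by (simp add: norm_mult norm_divide)
    define xv where "xv = (\<lambda>j. p j + q j * \<zeta>)"
    define yv where "yv = (\<lambda>i. t i + cnj \<zeta> * s i)"
    have Hz: "H \<zeta> = (\<Sum>i<k. cnj (yv i) * mvk k (\<lambda>i j. F i j (phi \<mu> \<zeta>)) xv i)"
      unfolding H_def yv_def xv_def mvk_def by (intro sum.cong refl) (simp add: algebra_simps)
    have "cmod (H \<zeta>) \<le> (nsq k xv + nsq k yv) / 2"
      unfolding Hz by (rule bilin_bound) (rule contr[OF phi_cball[OF mu]], use z1 in auto)
    also have "nsq k xv + nsq k yv = X + 2 * Re (Cc * \<zeta>)"
      unfolding xv_def yv_def nsq_lin[OF z1] nsq_lin2[OF z1] X_def Cc_def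
      by (simp add: algebra_simps)
    finally have "cmod (H \<zeta>) \<le> (X + 2 * Re (Cc * \<zeta>)) / 2" .
    then have "2 * pi * cmod (H \<zeta>) \<le> 2 * pi * ((X + 2 * Re (Cc * \<zeta>)) / 2)"
      by (rule mult_left_mono) (use pi_gt_zero in simp)
    moreover have "2 * pi * ((X + 2 * Re (Cc * \<zeta>)) / 2) = pi * X + 2 * pi * Re (Cc * \<zeta>)"
      by (simp add: field_simps)
    ultimately show ?thesis unfolding nI g_def \<zeta>_def[symmetric] by linarith
  qed
  have "norm (integral {0..1} I) \<le> integral {0..1} g"
    by (rule integral_norm_bound_integral)
       (use hasI hasg bound in \<open>auto simp: has_integral_integrable\<close>)
  then have "norm (2 * pi * \<i> * T) \<le> pi * X"
    using integral_unique[OF hasI] integral_unique[OF hasg] by simp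
  then have "2 * pi * cmod T \<le> pi * X" by (simp add: norm_mult)
  then have "cmod T \<le> X / 2" using pi_gt_zero by (simp add: field_simps)
  then show ?thesis unfolding T_def X_def c_def .
qed

lemma sum_vs: "(\<Sum>j\<in>S. f j *s v + g j *s u) = (\<Sum>j\<in>S. f j) *s v + (\<Sum>j\<in>S. g j) *s (u::complex^2)"
  by (simp add: vec_eq_iff sum.distrib sum_distrib_right)

lemma cnj_self_mult: "cnj z * z = complex_of_real ((cmod z)\<^sup>2)"
  using cmod_sq_c[of z] by (simp add: mult.commute)

lemma SP:
  fixes F :: "nat \<Rightarrow> nat \<Rightarrow> complex \<Rightarrow> complex"
  assumes Fin: "\<And>i j. i < k \<Longrightarrow> j < k \<Longrightarrow> F i j \<in> disk_algebra"
    and contr: "\<And>w x. cmod w \<le> 1 \<Longrightarrow> nsq k x \<le> 1 \<Longrightarrow> nsq k (mvk k (\<lambda>i j. F i j w) x) \<le> 1"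
    and mu: "cmod \<mu> < 1"
  shows "nsq k (mvk k (\<lambda>i j. F i j \<mu>) p)
       + nsq k (\<lambda>i. mvk k (\<lambda>i j. F i j \<mu>) q i + (1 - \<mu> * cnj \<mu>) * mvk k (\<lambda>i j. deriv (F i j) \<mu>) p i)
       \<le> nsq k p + nsq k q"
proof -
  define s where "s = mvk k (\<lambda>i j. F i j \<mu>) p"
  define t where "t = (\<lambda>i. mvk k (\<lambda>i j. F i j \<mu>) q i + (1 - \<mu> * cnj \<mu>) * mvk k (\<lambda>i j. deriv (F i j) \<mu>) p i)"
  have K: "cmod (\<Sum>i<k. cnj (s i) * s i + cnj (t i) * t i) \<le> (nsq k p + nsq k q + nsq k s + nsq k t) / 2"
  proof -
    have "(\<Sum>i<k. cnj (s i) * s i + cnj (t i) * t i) = (\<Sum>i<k. cnj (s i) * mvk k (\<lambda>i j. F i j \<mu>) p i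
            + cnj (t i) * (mvk k (\<lambda>i j. F i j \<mu>) q i
               + (1 - \<mu> * cnj \<mu>) * mvk k (\<lambda>i j. deriv (F i j) \<mu>) p i))"
      by (simp add: s_def t_def)
    then show ?thesis using KL[OF Fin contr mu, where s=s and t=t and p=p and q=q] by simp
  qed
  have "(\<Sum>i<k. cnj (s i) * s i + cnj (t i) * t i) = complex_of_real (nsq k s + nsq k t)"
    by (simp add: cnj_self_mult nsq_def sum.distrib)
  then have E: "cmod (\<Sum>i<k. cnj (s i) * s i + cnj (t i) * t i) = nsq k s + nsq k t"
    using nsq_nonneg[of k s] nsq_nonneg[of k t] by (simp only: norm_of_real)
  have "nsq k s + nsq k t \<le> (nsq k p + nsq k q + nsq k s + nsq k t) / 2"
    using K[unfolded E] .
  then have "nsq k s + nsq k t \<le> nsq k p + nsq k q" by (simp add: field_simps)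
  then show ?thesis by (simp only: s_def t_def)
qed

lemma scaling:
  assumes SP: "\<And>p q. nsq k (mvk k A p) + nsq k (\<lambda>i. mvk k A q i + c * mvk k D p i) \<le> nsq k p + nsq k q"
    and kap: "cmod \<kappa> \<le> 2" and pq: "nsq k p + nsq k q \<le> 1"
  shows "nsq k (mvk k A p) + nsq k (\<lambda>i. mvk k A q i + c * mvk k D (\<lambda>j. \<kappa> * p j) i) \<le> 4"
proof -
  define K where "K = (cmod \<kappa>)\<^sup>2"
  define P where "P = nsq k (mvk k A p)"
  define Q where "Q = nsq k (\<lambda>i. mvk k A q i + c * mvk k D (\<lambda>j. \<kappa> * p j) i)"
  have K0: "0 \<le> K" and K4: "K \<le> 4"
    using kap unfolding K_def by (simp_all add: power_mono[of _ 2 2, simplified])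
  have h1: "K * P + Q \<le> K * nsq k p + nsq k q"
    using SP[of "\<lambda>j. \<kappa> * p j" q] unfolding P_def Q_def K_def by (simp add: mvk_scale nsq_scale)
  have h2: "P \<le> nsq k p"
    using SP[of p "\<lambda>_. 0"] nsq_nonneg[of k "\<lambda>i. mvk k A (\<lambda>_. 0) i + c * mvk k D p i"]
    unfolding P_def by (simp add: nsq_def)
  have P0: "0 \<le> P" unfolding P_def by (rule nsq_nonneg)
  have np0: "0 \<le> nsq k p" and nq0: "0 \<le> nsq k q" by (simp_all add: nsq_nonneg)
  show ?thesis
  proof (cases "K \<le> 1")
    case True
    have "(1 - K) * P \<le> (1 - K) * nsq k p" using True h2 by (intro mult_left_mono) simp_all
    then have "P + Q \<le> nsq k p + nsq k q" using h1 by (simp add: algebra_simps)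
    then show ?thesis using pq unfolding P_def Q_def by simp
  next
    case False
    have "K * P \<ge> P" using False P0 by (simp add: mult_le_cancel_right1)
    moreover have "K * nsq k q \<ge> nsq k q" using False nq0 by (simp add: mult_le_cancel_right1)
    moreover have "K * (nsq k p + nsq k q) \<le> 4 * 1"
      using K4 pq K0 by (intro mult_mono) (simp_all add: np0 nq0)
    ultimately have "P + Q \<le> 4" using h1 by (simp add: algebra_simps)
    then show ?thesis unfolding P_def Q_def .
  qed
qed

lemma cmat_bound:
  fixes k :: nat and x :: "nat \<Rightarrow> complex" and M :: "nat \<Rightarrow> nat \<Rightarrow> complex"
  assumes x: "(\<Sum>i<k. (cmod (x i))\<^sup>2) \<le> 1"
  shows "sqrt (\<Sum>i<k. (cmod (\<Sum>j<k. M i j * x j))\<^sup>2) \<le> (\<Sum>i<k. \<Sum>j<k. cmod (M i j))"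
proof -
  have xj: "cmod (x j) \<le> 1" if "j < k" for j
  proof -
    have "(cmod (x j))\<^sup>2 \<le> (\<Sum>i<k. (cmod (x i))\<^sup>2)"
      by (rule member_le_sum) (use that in auto)
    then have "(cmod (x j))\<^sup>2 \<le> 1" using x by linarith
    then show ?thesis by (simp add: abs_square_le_1)
  qed
  have "sqrt (\<Sum>i<k. (cmod (\<Sum>j<k. M i j * x j))\<^sup>2) = L2_set (\<lambda>i. cmod (\<Sum>j<k. M i j * x j)) {..<k}"
    by (simp add: L2_set_def)
  also have "\<dots> \<le> (\<Sum>i<k. cmod (\<Sum>j<k. M i j * x j))"
    by (rule L2_set_le_sum) simp
  also have "\<dots> \<le> (\<Sum>i<k. \<Sum>j<k. cmod (M i j))"
  proof (rule sum_mono)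
    fix i
    have "cmod (\<Sum>j<k. M i j * x j) \<le> (\<Sum>j<k. cmod (M i j * x j))" by (rule norm_sum)
    also have "\<dots> \<le> (\<Sum>j<k. cmod (M i j))"
    proof (rule sum_mono)
      fix j assume "j \<in> {..<k}"
      then show "cmod (M i j * x j) \<le> cmod (M i j)"
        using xj[of j] by (simp add: norm_mult mult_left_le)
    qed
    finally show "cmod (\<Sum>j<k. M i j * x j) \<le> (\<Sum>j<k. cmod (M i j))" .
  qed
  finally show ?thesis .
qed

lemma cmat_bdd:
  fixes k :: nat and M :: "nat \<Rightarrow> nat \<Rightarrow> complex"
  shows "bdd_above ((\<lambda>x. sqrt (\<Sum>i<k. (cmod (\<Sum>j<k. M i j * x j))\<^sup>2)) `
      {x. (\<Sum>i<k. (cmod (x i))\<^sup>2) \<le> 1})"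
  by (rule bdd_aboveI[of _ "\<Sum>i<k. \<Sum>j<k. cmod (M i j)"]) (auto intro: cmat_bound)

lemma cmat_le: "cmat_norm k M \<le> (\<Sum>i<k. \<Sum>j<k. cmod (M i j))"
  unfolding cmat_norm_def
  by (rule cSUP_least) (auto intro: cmat_bound exI[of _ "\<lambda>_. 0"])

lemma contr_from_norm:
  fixes F :: "nat \<Rightarrow> nat \<Rightarrow> complex \<Rightarrow> complex"
  assumes Fin: "\<forall>i<k. \<forall>j<k. F i j \<in> disk_algebra" and Fn: "da_mat_norm k F \<le> 1"
    and w: "cmod w \<le> 1" and x: "nsq k x \<le> 1"
  shows "nsq k (mvk k (\<lambda>i j. F i j w) x) \<le> 1"
proof -
  define G where "G = (\<lambda>w. \<Sum>i<k. \<Sum>j<k. cmod (F i j w))"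
  have Gc: "continuous_on (cball 0 1) G"
    unfolding G_def using Fin
    by (intro continuous_intros) (auto simp: disk_algebra_def)
  have "compact (G ` cball 0 1)" by (rule compact_continuous_image[OF Gc compact_cball])
  then have bG: "bdd_above (G ` cball 0 1)" by (intro bounded_imp_bdd_above compact_imp_bounded)
  then obtain B where B: "\<forall>w\<in>cball 0 1. G w \<le> B" by (auto simp: bdd_above_def)
  have bdd: "bdd_above ((\<lambda>w. cmat_norm k (\<lambda>i j. F i j w)) ` cball 0 1)"
  proof (rule bdd_aboveI[of _ B])
    fix y assume "y \<in> (\<lambda>w. cmat_norm k (\<lambda>i j. F i j w)) ` cball 0 1"
    then obtain v where v: "v \<in> cball 0 1" and y: "y = cmat_norm k (\<lambda>i j. F i j v)" by blast
    have "y \<le> G v" unfolding y G_def by (rule cmat_le)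
    also have "G v \<le> B" using B v by blast
    finally show "y \<le> B" .
  qed
  have wc: "w \<in> cball 0 1" using w by simp
  have "sqrt (nsq k (mvk k (\<lambda>i j. F i j w) x)) \<le> cmat_norm k (\<lambda>i j. F i j w)"
    unfolding cmat_norm_def nsq_def mvk_def
    by (rule cSUP_upper[OF _ cmat_bdd]) (use x in \<open>simp add: nsq_def\<close>)
  also have "\<dots> \<le> da_mat_norm k F"
    unfolding da_mat_norm_def by (rule cSUP_upper[OF wc bdd])
  finally have "sqrt (nsq k (mvk k (\<lambda>i j. F i j w) x)) \<le> 1" using Fn by linarith
  then show ?thesis by simp
qed

theorem proposition6p4:
  fixes \<theta> :: "(complex \<Rightarrow> complex) \<Rightarrow> complex^2^2"
    and \<alpha> :: "(complex \<Rightarrow> complex) \<Rightarrow> (complex \<Rightarrow> complex)"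
  assumes theta_linear: "\<And>c f g. f \<in> disk_algebra \<Longrightarrow> g \<in> disk_algebra \<Longrightarrow>
                  \<theta> (\<lambda>w. c * f w + g w) = cscale c (\<theta> f) + \<theta> g"
    and theta_mult: "\<And>f g. f \<in> disk_algebra \<Longrightarrow> g \<in> disk_algebra \<Longrightarrow>
                  \<theta> (\<lambda>w. f w * g w) = \<theta> f ** \<theta> g"
    and theta_unital: "\<theta> da_one = mat 1"
    and theta_bounded: "\<exists>C. \<forall>f\<in>disk_algebra. m2_norm (\<theta> f) \<le> C * da_norm f"
    and alpha_maps: "\<And>f. f \<in> disk_algebra \<Longrightarrow> \<alpha> f \<in> disk_algebra"
    and alpha_antilinear: "\<And>c f g. f \<in> disk_algebra \<Longrightarrow> g \<in> disk_algebra \<Longrightarrow>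
                  \<alpha> (\<lambda>w. c * f w + g w) = (\<lambda>w. cnj c * \<alpha> f w + \<alpha> g w)"
    and alpha_unital: "\<alpha> da_one = da_one"
    and theta_alpha_contr: "\<And>f. f \<in> disk_algebra \<Longrightarrow> da_norm f \<le> 1 \<Longrightarrow>
                  m2_norm (cscale (1/2) (\<theta> f + cadj (\<theta> (\<alpha> f)))) \<le> 1"
    and spec: "\<exists>\<mu>. cmod \<mu> < 1 \<and> mat_spectrum (\<theta> da_z) = {\<mu>}"
  shows "\<forall>k. \<forall>F. (\<forall>i<k. \<forall>j<k. F i j \<in> disk_algebra) \<longrightarrow> da_mat_norm k F \<le> 1 \<longrightarrow>
           blk_norm k (\<lambda>i j. \<theta> (F i j)) \<le> 2"
proof -
  obtain \<mu> where mu: "cmod \<mu> < 1" and sp: "mat_spectrum (\<theta> da_z) = {\<mu>}" using spec by blast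
  define N where "N = \<theta> da_z - mat \<mu>"
  have NN: "N ** N = 0" and tr: "N$1$1 + N$2$2 = 0" using spec_nil[OF sp] by (simp_all add: N_def)
  have repr: "\<theta> h = cscale (h \<mu>) (mat 1) + cscale (deriv h \<mu>) N" if "h \<in> disk_algebra" for h
    unfolding N_def
    by (rule theta_repr[where \<theta>=\<theta> and \<mu>=\<mu> and h=h, OF theta_linear theta_mult theta_unital mu NN[unfolded N_def] that])
  obtain u a where u: "(cmod (u$1))\<^sup>2 + (cmod (u$2))\<^sup>2 = 1" and Nu: "N *v u = 0"
      and Nv: "N *v vperp u = a *s u"
    using exists_basis[OF NN tr] by blast
  have ab: "cmod a \<le> 2 * (1 - (cmod \<mu>)\<^sup>2)"
    by (rule a_bound[where \<theta>=\<theta> and \<alpha>=\<alpha> and \<mu>=\<mu> and N=N and u=u and a=a,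
          OF repr alpha_maps theta_alpha_contr mu u Nu Nv])
  show ?thesis
  proof (intro allI impI)
    fix k :: nat and F :: "nat \<Rightarrow> nat \<Rightarrow> complex \<Rightarrow> complex"
    assume Fin: "\<forall>i<k. \<forall>j<k. F i j \<in> disk_algebra" and Fn: "da_mat_norm k F \<le> 1"
    define A where "A = (\<lambda>i j. F i j \<mu>)"
    define D where "D = (\<lambda>i j. deriv (F i j) \<mu>)"
    define r where "r = 1 - (cmod \<mu>)\<^sup>2"
    have r0: "r > 0" using mu by (simp add: r_def abs_square_less_1)
    define c where "c = 1 - \<mu> * cnj \<mu>"
    have cr: "c = complex_of_real r" by (simp add: c_def r_def cmod_sq_c)
    define \<kappa> where "\<kappa> = a / c"
    have ca: "c * \<kappa> = a" using r0 by (simp add: \<kappa>_def cr)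
    have kap: "cmod \<kappa> \<le> 2"
    proof -
      have "cmod \<kappa> = cmod a / r" using r0 by (simp add: \<kappa>_def cr norm_divide)
      then show ?thesis using ab r0 by (simp add: r_def divide_le_eq)
    qed
    have Fin': "\<And>i j. i < k \<Longrightarrow> j < k \<Longrightarrow> F i j \<in> disk_algebra" using Fin by blast
    have contr: "\<And>w x. cmod w \<le> 1 \<Longrightarrow> nsq k x \<le> 1 \<Longrightarrow> nsq k (mvk k (\<lambda>i j. F i j w) x) \<le> 1"
      by (rule contr_from_norm[OF Fin Fn])
    have SPk: "nsq k (mvk k A p) + nsq k (\<lambda>i. mvk k A q i + c * mvk k D p i) \<le> nsq k p + nsq k q"
      for p q
      unfolding A_def D_def c_def by (rule SP[OF Fin' contr mu])
    show "blk_norm k (\<lambda>i j. \<theta> (F i j)) \<le> 2"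
      unfolding blk_norm_def
    proof (rule cSUP_least)
      show "{x::nat \<Rightarrow> complex^2. (\<Sum>i<k. (norm (x i))\<^sup>2) \<le> 1} \<noteq> {}"
        by (auto intro: exI[of _ "\<lambda>_. 0"])
    next
      fix x :: "nat \<Rightarrow> complex^2"
      assume "x \<in> {x. (\<Sum>i<k. (norm (x i))\<^sup>2) \<le> 1}"
      then have x1: "(\<Sum>i<k. (norm (x i))\<^sup>2) \<le> 1" by simp
      define p where "p = (\<lambda>j. cinner (x j) (vperp u))"
      define q where "q = (\<lambda>j. cinner (x j) u)"
      have xd: "x j = p j *s vperp u + q j *s u" for j
        unfolding p_def q_def by (rule onb_decomp[OF u])
      have pq: "nsq k p + nsq k q \<le> 1"
      proof -
        have "nsq k p + nsq k q = (\<Sum>i<k. (norm (x i))\<^sup>2)"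
          unfolding nsq_def p_def q_def sum.distrib[symmetric] by (simp add: onb_norm[OF u])
        then show ?thesis using x1 by simp
      qed
      have tm: "\<theta> (F i j) *v x j = (A i j * p j) *s vperp u + (A i j * q j + a * (D i j * p j)) *s u"
        if "i < k" "j < k" for i j
      proof -
        have "\<theta> (F i j) *v x j = (cscale (A i j) (mat 1) + cscale (D i j) N) *v (p j *s vperp u + q j *s u)"
          using repr[OF Fin'[OF that]] xd[of j] by (simp add: A_def D_def)
        also have "\<dots> = (A i j * p j) *s vperp u + (A i j * q j + a * (D i j * p j)) *s u"
          by (simp add: mv_add mv_cscale mv_add_right mv_scale_right Nu Nv vec_eq_iff algebra_simps)
        finally show ?thesis .
      qed
      have out: "(\<Sum>j<k. \<theta> (F i j) *v x j) = mvk k A p i *s vperp u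
                  + (mvk k A q i + c * mvk k D (\<lambda>j. \<kappa> * p j) i) *s u" if "i < k" for i
      proof -
        have "(\<Sum>j<k. \<theta> (F i j) *v x j) = (\<Sum>j<k. (A i j * p j) *s vperp u + (A i j * q j + a * (D i j * p j)) *s u)"
          by (rule sum.cong[OF refl]) (use that tm in simp)
        also have "\<dots> = (\<Sum>j<k. A i j * p j) *s vperp u + (\<Sum>j<k. A i j * q j + a * (D i j * p j)) *s u"
          by (rule sum_vs)
        also have "(\<Sum>j<k. A i j * q j + a * (D i j * p j)) = mvk k A q i + c * mvk k D (\<lambda>j. \<kappa> * p j) i"
          unfolding mvk_scale by (simp add: mvk_def sum.distrib sum_distrib_left ca mult.assoc[symmetric])
        finally show ?thesis by (simp add: mvk_def)
      qed
      have "(\<Sum>i<k. (norm (\<Sum>j<k. \<theta> (F i j) *v x j))\<^sup>2)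
          = nsq k (mvk k A p) + nsq k (\<lambda>i. mvk k A q i + c * mvk k D (\<lambda>j. \<kappa> * p j) i)"
        unfolding nsq_def sum.distrib[symmetric]
        by (rule sum.cong[OF refl]) (subst out, simp, rule norm_comb[OF u])
      also have "\<dots> \<le> 4" by (rule scaling[OF SPk kap pq])
      finally have "(\<Sum>i<k. (norm (\<Sum>j<k. \<theta> (F i j) *v x j))\<^sup>2) \<le> 2\<^sup>2" by simp
      then show "sqrt (\<Sum>i<k. (norm (\<Sum>j<k. \<theta> (F i j) *v x j))\<^sup>2) \<le> 2"
        by (rule real_le_lsqrt[rotated]) simp_all
    qed
  qed
qed

end
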